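(* Let $D$ be a digraph and $(P,\mathrm{org})$ a valid DAG-depth decomposition of $D$ of depth $k$. Then every cop strategy based on $(P,\mathrm{org})$ is a winning strategy in the lift-free cops-and-robber game on $D$ that uses at most $k$ cops.
   Context: A DAG-depth decomposition of a digraph $D$ is a pair $(P,\mathrm{org})$ where $P$ is a directed acyclic graph and $\mathrm{org}:V(P)\to V(D)$ is surjective; $x'\in V(P)$ is called a copy of $\mathrm{org}(x')$. In $P$, roots are vertices of indegree $0$; $w'$ is a descendant of $v'$ if $P$ contains a directed path from $v'$ to $w'$. The depth of $P$ is the maximum number of vertices on a directed path in $P$. The decomposition is valid if for every $v'\in V(P)$ with $\mathrm{org}(v')=v$ and every $u\in N^+_D(v)$, either (1) there is $u'$ with $\mathrm{org}(u')=u$ that is a descendant of $v'$ in $P$, or (2) every directed path in $P$ from any root of $P$ to $v'$ contains a vertex $u'$ with $\mathrm{org}(u')=u$. Lift-free cops-and-robber game on $D$: the robber occupies a vertex, chosen at the start, and knows the cops' positions; the cop player knows the robber's position. In each turn the cop player announces a vertex where a new cop will be placed; before the cop lands the robber may move arbitrarily far along directed paths of $D$ avoiding vertices occupied by cops. Placed cops never move. The robber is caught when a cop is placed on his current vertex. A strategy based on $(P,\mathrm{org})$: each cop move is made "because of" a vertex $x'\in V(P)$, meaning the cop is placed on $\mathrm{org}(x')$ unless that vertex already holds a cop, in which case no new cop is placed. The sequence $x'_1,x'_2,\dots$ of vertices of $P$ must satisfy: (i) $x'_1$ is a root of $P$ and each $x'_{i+1}$ is an out-neighbor of $x'_i$ in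 $P$; (ii) among the candidates allowed by (i), the chosen one must have in $P$ a directed path to some copy of the robber's current position. *)

theory Defs
  imports Main
begin

definition dpath :: "'v set \<Rightarrow> ('v \<times> 'v) set \<Rightarrow> 'v list \<Rightarrow> bool" where
  "dpath V E ps \<longleftrightarrow> ps \<noteq> [] \<and> set ps \<subseteq> V \<and>
     (\<forall>i. Suc i < length ps \<longrightarrow> (ps ! i, ps ! Suc i) \<in> E)"

definition is_root :: "'v set \<Rightarrow> ('v \<times> 'v) set \<Rightarrow> 'v \<Rightarrow> bool" where
  "is_root VP EP x \<longleftrightarrow> x \<in> VP \<and> \<not> (\<exists>y. (y, x) \<in> EP)"

definition is_dag :: "'v set \<Rightarrow> ('v \<times> 'v) set \<Rightarrow> bool" where
  "is_dag VP EP \<longleftrightarrow> finite VP \<and> EP \<subseteq> VP \<times> VP \<and> acyclic EP"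

definition dag_depth :: "'v set \<Rightarrow> ('v \<times> 'v) set \<Rightarrow> nat" where
  "dag_depth VP EP = Max (length ` {ps. dpath VP EP ps})"

text \<open>Valid DAG-depth decomposition (P = (VP,EP), org) of D = (V,E).
  Descendant = reachable by a (possibly trivial) directed path.\<close>
definition valid_dag_decomp ::
  "'a set \<Rightarrow> ('a \<times> 'a) set \<Rightarrow> 'b set \<Rightarrow> ('b \<times> 'b) set \<Rightarrow> ('b \<Rightarrow> 'a) \<Rightarrow> bool" where
  "valid_dag_decomp V E VP EP org \<longleftrightarrow>
     is_dag VP EP \<and> org ` VP = V \<and>
     (\<forall>v'\<in>VP. \<forall>u. (org v', u) \<in> E \<longrightarrow>
        (\<exists>u'\<in>VP. org u' = u \<and> (v', u') \<in> EP\<^sup>*) \<or>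
        (\<forall>ps. dpath VP EP ps \<and> is_root VP EP (hd ps) \<and> last ps = v' \<longrightarrow>
              (\<exists>u'\<in>set ps. org u' = u)))"

definition robber_move :: "'a set \<Rightarrow> ('a \<times> 'a) set \<Rightarrow> 'a set \<Rightarrow> 'a \<Rightarrow> 'a \<Rightarrow> bool" where
  "robber_move V E C r r' \<longleftrightarrow>
     (\<exists>ps. dpath V E ps \<and> hd ps = r \<and> last ps = r' \<and> set ps \<inter> C = {})"

text \<open>A cop strategy maps a history (the P-vertices x'_1..x'_n chosen so far and the
  robber positions r_0..r_n, r_n being the current one) to the next P-vertex
  (None = the strategy cannot move).\<close>
type_synonym ('a, 'b) cop_strategy = "'b list \<Rightarrow> 'a list \<Rightarrow> 'b option"

definition allowed_next ::
  "'b set \<Rightarrow> ('b \<times> 'b) set \<Rightarrow> ('b \<Rightarrow> 'a) \<Rightarrow> 'b list \<Rightarrow> 'a \<Rightarrow> 'b \<Rightarrow> bool" where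
  "allowed_next VP EP org xs r x \<longleftrightarrow>
     x \<in> VP \<and> (if xs = [] then is_root VP EP x else (last xs, x) \<in> EP) \<and>
     (\<exists>y\<in>VP. org y = r \<and> (x, y) \<in> EP\<^sup>*)"

definition strategy_based_on ::
  "'b set \<Rightarrow> ('b \<times> 'b) set \<Rightarrow> ('b \<Rightarrow> 'a) \<Rightarrow> ('a, 'b) cop_strategy \<Rightarrow> bool" where
  "strategy_based_on VP EP org \<sigma> \<longleftrightarrow>
     (\<forall>xs rs. rs \<noteq> [] \<longrightarrow>
        (case \<sigma> xs rs of
           Some x \<Rightarrow> allowed_next VP EP org xs (last rs) x
         | None \<Rightarrow> \<not> (\<exists>x. allowed_next VP EP org xs (last rs) x)))"

text \<open>Round i: cop announces xs!i = sigma(previous choices, positions r_0..r_i);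
  robber moves r_i to r_(i+1) avoiding the cops already placed; the cop lands on
  org (xs!i).  The robber was not caught in any round before the last one.\<close>
definition consistent_history ::
  "'a set \<Rightarrow> ('a \<times> 'a) set \<Rightarrow> ('b \<Rightarrow> 'a) \<Rightarrow> ('a, 'b) cop_strategy \<Rightarrow> 'b list \<Rightarrow> 'a list \<Rightarrow> bool" where
  "consistent_history V E org \<sigma> xs rs \<longleftrightarrow>
     length rs = Suc (length xs) \<and> rs ! 0 \<in> V \<and>
     (\<forall>i < length xs.
        \<sigma> (take i xs) (take (Suc i) rs) = Some (xs ! i) \<and>
        robber_move V E (org ` set (take i xs)) (rs ! i) (rs ! Suc i)) \<and>
     (\<forall>i. Suc i < length xs \<longrightarrow> rs ! Suc i \<noteq> org (xs ! i))"

definition caught :: "('b \<Rightarrow> 'a) \<Rightarrow> 'b list \<Rightarrow> 'a list \<Rightarrow> bool" where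
  "caught org xs rs \<longleftrightarrow> xs \<noteq> [] \<and> last rs = org (last xs)"

text \<open>sigma is winning using at most k cops: it can always move while the robber is
  free, no play goes on forever, and at most k cops are ever placed.\<close>
definition winning_with_at_most ::
  "'a set \<Rightarrow> ('a \<times> 'a) set \<Rightarrow> ('b \<Rightarrow> 'a) \<Rightarrow> ('a, 'b) cop_strategy \<Rightarrow> nat \<Rightarrow> bool" where
  "winning_with_at_most V E org \<sigma> k \<longleftrightarrow>
     (\<forall>xs rs. consistent_history V E org \<sigma> xs rs \<and> \<not> caught org xs rs \<longrightarrow> \<sigma> xs rs \<noteq> None) \<and>
     \<not> (\<exists>X R. \<forall>n. consistent_history V E org \<sigma> (map X [0..<n]) (map R [0..<Suc n])) \<and>
     (\<forall>xs rs. consistent_history V E org \<sigma> xs rs \<longrightarrow> card (org ` set xs) \<le> k)"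

end

theory Submission
  imports Defs
begin

lemma last_take_Suc: "n < length xs \<Longrightarrow> last (take (Suc n) xs) = xs ! n"
proof -
  assume n: "n < length xs"
  then have "take (Suc n) xs \<noteq> []" by (cases xs) auto
  then have "last (take (Suc n) xs) = take (Suc n) xs ! (length (take (Suc n) xs) - 1)"
    by (rule last_conv_nth)
  also have "length (take (Suc n) xs) = Suc n" using n by simp
  finally show ?thesis by simp
qed

lemma dpath_nth_rtrancl:
  assumes "dpath V E ps" "i \<le> j" "j < length ps"
  shows "(ps!i, ps!j) \<in> E\<^sup>*"
  using assms(2,3)
proof (induction j)
  case 0 then show ?case by simp
next
  case (Suc j)
  show ?case
  proof (cases "i = Suc j")
    case True then show ?thesis by simp
  next
    case False
    with Suc have "(ps!i, ps!j) \<in> E\<^sup>*" by simp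
    moreover have "(ps!j, ps!Suc j) \<in> E" using assms(1) Suc.prems unfolding dpath_def by blast
    ultimately show ?thesis by simp
  qed
qed

lemma dpath_nth_trancl:
  assumes "dpath V E ps" "i < j" "j < length ps"
  shows "(ps!i, ps!j) \<in> E\<^sup>+"
proof -
  have "(ps!i, ps!Suc i) \<in> E" using assms unfolding dpath_def by auto
  moreover have "(ps!Suc i, ps!j) \<in> E\<^sup>*" using dpath_nth_rtrancl[OF assms(1)] assms by auto
  ultimately show ?thesis by auto
qed

lemma dpath_hd_rtrancl:
  assumes "dpath V E ps" "x \<in> set ps"
  shows "(hd ps, x) \<in> E\<^sup>*"
proof -
  obtain j where "j < length ps" "x = ps!j" using assms(2) by (auto simp: in_set_conv_nth)
  moreover have "hd ps = ps!0" using assms(1) unfolding dpath_def by (simp add: hd_conv_nth)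
  ultimately show ?thesis using dpath_nth_rtrancl[OF assms(1), of 0 j] by simp
qed

lemma dpath_distinct:
  assumes "dpath V E ps" "acyclic E"
  shows "distinct ps"
proof -
  have *: False if ij: "i < j" "j < length ps" "ps!i = ps!j" for i j
  proof -
    have "(ps!i, ps!i) \<in> E\<^sup>+" using dpath_nth_trancl[OF assms(1), of i j] ij by simp
    with assms(2) show False unfolding acyclic_def by blast
  qed
  show ?thesis unfolding distinct_conv_nth
  proof (intro allI impI)
    fix i j assume "i < length ps" "j < length ps" "i \<noteq> j"
    then show "ps ! i \<noteq> ps ! j" using *[of i j] *[of j i] by (metis linorder_neqE_nat)
  qed
qed

lemma dpath_snoc:
  assumes "dpath V E xs" "(last xs, c) \<in> E" "c \<in> V"
  shows "dpath V E (xs @ [c])"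
  unfolding dpath_def
proof (intro conjI allI impI)
  show "xs @ [c] \<noteq> []" by simp
  show "set (xs @ [c]) \<subseteq> V" using assms unfolding dpath_def by auto
  fix i assume i: "Suc i < length (xs @ [c])"
  show "((xs @ [c]) ! i, (xs @ [c]) ! Suc i) \<in> E"
  proof (cases "Suc i < length xs")
    case True then show ?thesis using assms(1) unfolding dpath_def by (simp add: nth_append)
  next
    case False
    then have si: "Suc i = length xs" using i by simp
    have "xs \<noteq> []" using assms(1) unfolding dpath_def by simp
    then have "last xs = xs ! i" using si last_take_Suc[of i xs] by simp
    then show ?thesis using assms(2) si by (simp add: nth_append)
  qed
qed

lemma dpath_extend:
  assumes "(a, b) \<in> E\<^sup>*" "dpath V E pre" "last pre = a" "E \<subseteq> V \<times> V"
  shows "\<exists>ps. dpath V E (pre @ ps) \<and> last (pre @ ps) = b \<and> (\<forall>z\<in>set ps. (a, z) \<in> E\<^sup>*)"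
  using assms(1)
proof (induction rule: rtrancl_induct)
  case base then show ?case using assms by (intro exI[of _ "[]"]) simp
next
  case (step b c)
  then obtain ps where ps: "dpath V E (pre @ ps)" "last (pre @ ps) = b" "\<forall>z\<in>set ps. (a, z) \<in> E\<^sup>*" by blast
  have "c \<in> V" using step assms(4) by auto
  then have "dpath V E ((pre @ ps) @ [c])" using dpath_snoc[OF ps(1)] ps(2) step by blast
  then show ?case using ps step by (intro exI[of _ "ps @ [c]"]) auto
qed

lemma root_ancestor:
  assumes "is_dag VP EP" "y \<in> VP"
  shows "\<exists>x. is_root VP EP x \<and> (x, y) \<in> EP\<^sup>*"
proof -
  have fin: "finite EP" using assms(1) unfolding is_dag_def by (meson finite_SigmaI finite_subset)
  have "wf EP" using finite_acyclic_wf[OF fin] assms(1) unfolding is_dag_def by blast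
  then obtain z where z: "z \<in> {z. (z, y) \<in> EP\<^sup>*}" "\<And>w. (w, z) \<in> EP \<Longrightarrow> w \<notin> {z. (z, y) \<in> EP\<^sup>*}"
    by (rule wfE_min[of EP y "{z. (z, y) \<in> EP\<^sup>*}"]) auto
  have "z \<in> VP"
  proof (cases "z = y")
    case True then show ?thesis using assms by simp
  next
    case False
    then obtain w where "(z, w) \<in> EP" using z(1) by (auto elim: converse_rtranclE)
    then show ?thesis using assms(1) unfolding is_dag_def by auto
  qed
  moreover have "\<not> (\<exists>w. (w, z) \<in> EP)"
    using z by (meson converse_rtrancl_into_rtrancl mem_Collect_eq)
  ultimately show ?thesis using z(1) unfolding is_root_def by blast
qed

lemma hist_allowed:
  assumes "consistent_history V E org \<sigma> xs rs" "i < length xs" "strategy_based_on VP EP org \<sigma>"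
  shows "allowed_next VP EP org (take i xs) (rs ! i) (xs ! i)"
proof -
  have len: "length rs = Suc (length xs)" using assms(1) unfolding consistent_history_def by blast
  have s: "\<sigma> (take i xs) (take (Suc i) rs) = Some (xs ! i)"
    using assms(1,2) unfolding consistent_history_def by blast
  have ne: "take (Suc i) rs \<noteq> []" using len by (cases rs) auto
  have l: "last (take (Suc i) rs) = rs ! i" using len assms(2) by (simp add: last_take_Suc)
  show ?thesis using assms(3) ne s l unfolding strategy_based_on_def
    by (metis option.simps(5))
qed

lemma hist_facts:
  assumes "consistent_history V E org \<sigma> xs rs" "i < length xs" "strategy_based_on VP EP org \<sigma>"
  shows "xs ! i \<in> VP" "i = 0 \<Longrightarrow> is_root VP EP (xs ! 0)"
    "0 < i \<Longrightarrow> (xs ! (i - 1), xs ! i) \<in> EP"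
    "\<exists>y\<in>VP. org y = rs ! i \<and> (xs ! i, y) \<in> EP\<^sup>*"
proof -
  have a: "allowed_next VP EP org (take i xs) (rs ! i) (xs ! i)" using hist_allowed[OF assms] .
  then show "xs ! i \<in> VP" "\<exists>y\<in>VP. org y = rs ! i \<and> (xs ! i, y) \<in> EP\<^sup>*"
    unfolding allowed_next_def by auto
  show "i = 0 \<Longrightarrow> is_root VP EP (xs ! 0)" using a unfolding allowed_next_def by simp
  assume "0 < i"
  then have "take i xs \<noteq> []" "last (take i xs) = xs ! (i - 1)" using assms(2)
    last_take_Suc[of "i - 1" xs] by (cases xs, auto)
  then show "(xs ! (i - 1), xs ! i) \<in> EP" using a unfolding allowed_next_def by simp
qed

lemma hist_dpath:
  assumes "consistent_history V E org \<sigma> xs rs" "0 < n" "n \<le> length xs" "strategy_based_on VP EP org \<sigma>"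
  shows "dpath VP EP (take n xs) \<and> is_root VP EP (hd (take n xs))"
proof
  show "dpath VP EP (take n xs)" unfolding dpath_def
  proof (intro conjI allI impI)
    show "take n xs \<noteq> []" using assms by auto
    show "set (take n xs) \<subseteq> VP"
    proof
      fix x assume "x \<in> set (take n xs)"
      then obtain j where "j < length (take n xs)" "x = take n xs ! j" by (auto simp: in_set_conv_nth)
      then show "x \<in> VP" using hist_facts(1)[OF assms(1) _ assms(4), of j] by auto
    qed
    fix j assume "Suc j < length (take n xs)"
    then show "(take n xs ! j, take n xs ! Suc j) \<in> EP"
      using hist_facts(3)[OF assms(1) _ assms(4), of "Suc j"] by auto
  qed
  show "is_root VP EP (hd (take n xs))"
    using hist_facts(2)[OF assms(1) _ assms(4), of 0] assms by (cases xs) auto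
qed


lemma hist_inv:
  assumes EPV: "EP \<subseteq> VP \<times> VP"
    and val: "valid_dag_decomp V E VP EP org"
    and H: "consistent_history V E org \<sigma> xs rs" and i: "i < length xs"
    and S: "strategy_based_on VP EP org \<sigma>"
  shows "\<exists>c\<in>VP. org c = rs ! Suc i \<and> (xs ! i, c) \<in> EP\<^sup>*"
proof -
  define xi where "xi = xs ! i"
  define pre where "pre = take (Suc i) xs"
  have pre: "dpath VP EP pre" "is_root VP EP (hd pre)" using hist_dpath[OF H _ _ S, of "Suc i"] i pre_def by auto
  have lastpre: "last pre = xi" using i by (simp add: pre_def xi_def last_take_Suc)
  have setpre: "set pre \<subseteq> insert xi (set (take i xs))"
    unfolding pre_def xi_def using i by (simp add: take_Suc_conv_app_nth)
  obtain ps where ps: "dpath V E ps" "hd ps = rs ! i" "last ps = rs ! Suc i" "set ps \<inter> org ` set (take i xs) = {}"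
    using H i unfolding consistent_history_def robber_move_def by blast
  obtain y where y: "y \<in> VP" "org y = rs ! i" "(xi, y) \<in> EP\<^sup>*" using hist_facts(4)[OF H i S] xi_def by blast
  have valv: "\<And>v' u. v' \<in> VP \<Longrightarrow> (org v', u) \<in> E \<Longrightarrow> (\<exists>u'\<in>VP. org u' = u \<and> (v', u') \<in> EP\<^sup>* ) \<or> (\<forall>ps. dpath VP EP ps \<and> is_root VP EP (hd ps) \<and> last ps = v' \<longrightarrow> (\<exists>u'\<in>set ps. org u' = u))"
    using val unfolding valid_dag_decomp_def by blast
  have "\<forall>j < length ps. \<exists>c\<in>VP. org c = ps ! j \<and> (xi, c) \<in> EP\<^sup>*"
  proof (intro allI impI)
    fix j assume "j < length ps"
    then show "\<exists>c\<in>VP. org c = ps ! j \<and> (xi, c) \<in> EP\<^sup>*"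
    proof (induction j)
      case 0
      have "ps ! 0 = rs ! i" using ps(1,2) unfolding dpath_def by (simp add: hd_conv_nth)
      then show ?case using y by auto
    next
      case (Suc j)
      then obtain c where c: "c \<in> VP" "org c = ps ! j" "(xi, c) \<in> EP\<^sup>*" by auto
      have e: "(org c, ps ! Suc j) \<in> E" using ps(1) Suc.prems c(2) unfolding dpath_def by auto
      have notin: "ps ! Suc j \<notin> org ` set (take i xs)" using ps(4) nth_mem[OF Suc.prems] by blast
      from valv[OF c(1) e] show ?case
      proof
        assume "\<exists>u'\<in>VP. org u' = ps ! Suc j \<and> (c, u') \<in> EP\<^sup>*"
        then show ?thesis using c(3) by (meson rtrancl_trans)
      next
        assume all: "\<forall>ps'. dpath VP EP ps' \<and> is_root VP EP (hd ps') \<and> last ps' = c \<longrightarrow> (\<exists>u'\<in>set ps'. org u' = ps ! Suc j)"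
        obtain qs where qs: "dpath VP EP (pre @ qs)" "last (pre @ qs) = c" "\<forall>z\<in>set qs. (xi, z) \<in> EP\<^sup>*"
          using dpath_extend[OF c(3) pre(1) lastpre EPV] by blast
        have "hd (pre @ qs) = hd pre" using pre(1) unfolding dpath_def by simp
        then obtain u' where u': "u' \<in> set (pre @ qs)" "org u' = ps ! Suc j" using all qs pre(2) by metis
        have "u' \<in> VP" using qs(1) u'(1) unfolding dpath_def by blast
        moreover have "(xi, u') \<in> EP\<^sup>*"
        proof -
          have "u' \<in> set qs \<or> u' = xi \<or> u' \<in> set (take i xs)" using u'(1) setpre by auto
          then show ?thesis using qs(3) notin u'(2) by (metis imageI rtrancl.rtrancl_refl)
        qed
        ultimately show ?thesis using u'(2) by blast
      qed
    qed
  qed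
  moreover have "rs ! Suc i = ps ! (length ps - 1)" "length ps - 1 < length ps"
    using ps(1,3) unfolding dpath_def by (auto simp: last_conv_nth)
  ultimately show ?thesis unfolding xi_def by metis
qed

theorem theorem3p3:
  fixes V :: "'a set" and E :: "('a \<times> 'a) set"
    and VP :: "'b set" and EP :: "('b \<times> 'b) set" and org :: "'b \<Rightarrow> 'a"
    and k :: nat and \<sigma> :: "('a, 'b) cop_strategy"
  assumes "finite V" and "E \<subseteq> V \<times> V"
    and "valid_dag_decomp V E VP EP org"
    and "dag_depth VP EP = k"
    and "strategy_based_on VP EP org \<sigma>"
  shows "winning_with_at_most V E org \<sigma> k"
proof -
  have dag: "is_dag VP EP" and surj: "org ` VP = V" using assms(3) unfolding valid_dag_decomp_def by blast+
  have EPV: "EP \<subseteq> VP \<times> VP" and finVP: "finite VP" and acyc: "acyclic EP" using dag unfolding is_dag_def by auto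
  note S = assms(5)
  have P1: "\<sigma> xs rs \<noteq> None" if H: "consistent_history V E org \<sigma> xs rs" and nc: "\<not> caught org xs rs" for xs rs
  proof
    assume N: "\<sigma> xs rs = None"
    have len: "length rs = Suc (length xs)" using H unfolding consistent_history_def by blast
    have rne: "rs \<noteq> []" using len by (cases rs) auto
    have nox: "\<not> (\<exists>x. allowed_next VP EP org xs (last rs) x)"
      using S rne N unfolding strategy_based_on_def by (metis option.simps(4))
    show False
    proof (cases "xs = []")
      case True
      then have "last rs = rs ! 0" using len by (cases rs) auto
      then have "last rs \<in> V" using H unfolding consistent_history_def by simp
      then obtain y where y: "y \<in> VP" "org y = last rs" using surj by auto
      obtain x where "is_root VP EP x" "(x, y) \<in> EP\<^sup>*" using root_ancestor[OF dag y(1)] by blast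
      then have "allowed_next VP EP org xs (last rs) x" using True y unfolding allowed_next_def is_root_def by auto
      with nox show False by blast
    next
      case False
      define i where "i = length xs - 1"
      have i: "i < length xs" using False i_def by simp
      have lr: "last rs = rs ! Suc i" using len i_def False rne by (simp add: last_conv_nth)
      have lx: "last xs = xs ! i" using False i_def by (simp add: last_conv_nth)
      obtain c where c: "c \<in> VP" "org c = rs ! Suc i" "(xs ! i, c) \<in> EP\<^sup>*" using hist_inv[OF EPV assms(3) H i S] by blast
      have "c \<noteq> xs ! i" using nc False c(2) lr lx unfolding caught_def by auto
      then obtain x where x: "(xs ! i, x) \<in> EP" "(x, c) \<in> EP\<^sup>*" using c(3) by (auto elim: converse_rtranclE)
      have "allowed_next VP EP org xs (last rs) x" unfolding allowed_next_def using x EPV False lx lr c by auto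
      with nox show False by blast
    qed
  qed
  have P2: "\<not> (\<exists>X R. \<forall>n. consistent_history V E org \<sigma> (map X [0..<n]) (map R [0..<Suc n]))"
  proof
    assume "\<exists>X R. \<forall>n. consistent_history V E org \<sigma> (map X [0..<n]) (map R [0..<Suc n])"
    then obtain X R where H: "\<And>n. consistent_history V E org \<sigma> (map X [0..<n]) (map R [0..<Suc n])" by blast
    have inV: "X j \<in> VP" for j using hist_facts(1)[OF H[of "Suc j"] _ S, of j] by (simp add: nth_append)
    have ed: "(X j, X (Suc j)) \<in> EP" for j using hist_facts(3)[OF H[of "Suc (Suc j)"] _ S, of "Suc j"] by (simp add: nth_append)
    have tr: "(X j, X l) \<in> EP\<^sup>+" if "j < l" for j l
      using that
    proof (induction l)
      case 0 then show ?case by simp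
    next
      case (Suc l)
      then show ?case using ed[of l] by (cases "j = l") (auto intro: trancl_into_trancl)
    qed
    have "range X \<subseteq> VP" using inV by auto
    then have "finite (range X)" using finVP by (meson finite_subset)
    then have "\<not> inj X" using finite_imageD infinite_UNIV_nat by blast
    then obtain j l where "X j = X l" "j \<noteq> l" unfolding inj_def by blast
    then show False using tr[of j l] tr[of l j] acyc unfolding acyclic_def by (metis linorder_neqE_nat)
  qed
  have P3: "card (org ` set xs) \<le> k" if H: "consistent_history V E org \<sigma> xs rs" for xs rs
  proof (cases "xs = []")
    case True then show ?thesis by simp
  next
    case False
    have dp: "dpath VP EP xs" using hist_dpath[OF H _ _ S, of "length xs"] False by simp
    have fin: "finite (length ` {ps. dpath VP EP ps})"
    proof (rule finite_subset)
      show "length ` {ps. dpath VP EP ps} \<subseteq> {..card VP}"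
      proof
        fix n assume "n \<in> length ` {ps. dpath VP EP ps}"
        then obtain ps where p: "dpath VP EP ps" "n = length ps" by blast
        have "distinct ps" using dpath_distinct[OF p(1) acyc] .
        moreover have "set ps \<subseteq> VP" using p(1) unfolding dpath_def by blast
        ultimately have "length ps \<le> card VP" using finVP
          by (metis card_mono distinct_card)
        then show "n \<in> {..card VP}" using p(2) by simp
      qed
    qed simp
    have "card (org ` set xs) \<le> card (set xs)" by (rule card_image_le) simp
    also have "\<dots> \<le> length xs" by (rule card_length)
    also have "\<dots> \<le> k" using assms(4) fin dp unfolding dag_depth_def by (auto intro: Max_ge)
    finally show ?thesis .
  qed
  show ?thesis unfolding winning_with_at_most_def using P1 P2 P3 by blast
qed

end
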